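(* Let $(X,m)$ be a $\sigma$-finite measure space, let $1\le p<\infty$, let $\eta>1$, and let $\{T_t:t>0\}$ be a one-parameter family of (not necessarily linear) operators on $L^p(X,m)$. Let $f\in L^p(X,m)$ with $(x,t)\mapsto T_tf(x)$ measurable. Set $$F_\lambda=\Big\{(x,t)\in X\times(0,1/2):\frac{|T_tf(x)|}{\log^{\frac{1-\eta}{p}}(1/t)}>\lambda\Big\}.$$ (i) If $T^*f:=\sup_{t>0}|T_tf|\in L^p(X,m)$, then $\sup_{\lambda>0}\lambda^p(m\times v_\eta)(F_\lambda)\le\frac{1}{\eta-1}\|T^*f\|_{L^p(X,m)}^p$. In particular, if $p>1$ and $\|T^*h\|_{L^p}\le C_p\|h\|_{L^p}$ for all $h\in L^p(X,m)$, then $\sup_{\lambda>0}\lambda^p(m\times v_\eta)(F_\lambda)\le\frac{C_p^p}{\eta-1}\|f\|_{L^p(X,m)}^p$. (ii) If $g(x)=\lim_{t\to0+}T_tf(x)$ exists and is finite for $m$-a.e. $x\in X$, then $\frac{1}{\eta-1}\|g\|_{L^p(X,m)}^p\le\liminf_{\lambda\to\infty}\lambda^p(m\times v_\eta)(F_\lambda)$.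
   Context: For $\eta>1$, $v_\eta$ is the measure on $(0,1/2)$ given by $v_\eta(A)=\int_A t^{-1}\log^{-\eta}(1/t)\,dt$ for Lebesgue measurable $A\subset(0,1/2)$. *)

theory Defs
  imports "HOL-Analysis.Analysis"
begin

definition v_eta :: "real \<Rightarrow> real measure" where
  "v_eta \<eta> = density (restrict_space lborel {0<..<1/2})
      (\<lambda>t. ennreal (inverse t * ln (1 / t) powr (- \<eta>)))"

definition enn_powr :: "ennreal \<Rightarrow> real \<Rightarrow> ennreal" where
  "enn_powr x p = (if x = \<infinity> then \<infinity> else ennreal (enn2real x powr p))"

definition memLp :: "'a measure \<Rightarrow> real \<Rightarrow> ('a \<Rightarrow> real) \<Rightarrow> bool" where
  "memLp M p h \<longleftrightarrow> h \<in> borel_measurable M \<and> (\<integral>\<^sup>+ x. ennreal (\<bar>h x\<bar> powr p) \<partial>M) < \<infinity>"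

definition Lp_pow :: "'a measure \<Rightarrow> real \<Rightarrow> ('a \<Rightarrow> real) \<Rightarrow> ennreal" where
  "Lp_pow M p h = (\<integral>\<^sup>+ x. ennreal (\<bar>h x\<bar> powr p) \<partial>M)"

definition Tstar :: "(real \<Rightarrow> ('a \<Rightarrow> real) \<Rightarrow> 'a \<Rightarrow> real) \<Rightarrow> ('a \<Rightarrow> real) \<Rightarrow> 'a \<Rightarrow> ennreal" where
  "Tstar T h x = (SUP t\<in>{0<..}. ennreal \<bar>T t h x\<bar>)"

definition F_set :: "'a measure \<Rightarrow> real \<Rightarrow> real \<Rightarrow> (real \<Rightarrow> 'a \<Rightarrow> real) \<Rightarrow> real \<Rightarrow> ('a \<times> real) set" where
  "F_set M p \<eta> Tf c = {(x, t). x \<in> space M \<and> t \<in> {0<..<1/2} \<and>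
      \<bar>Tf t x\<bar> / (ln (1 / t) powr ((1 - \<eta>) / p)) > c}"

end

theory Submission
  imports Defs "HOL-Real_Asymp.Real_Asymp"
begin


lemma powr_neg_less_iff:
  fixes u b e :: real
  assumes "u > 0" "b > 0" "e > 0"
  shows "u powr (-e) < b \<longleftrightarrow> u > b powr (-1/e)"
proof -
  have "u powr (-e) < b \<longleftrightarrow> (u powr (-e)) powr (-1/e) > b powr (-1/e)"
    using assms by (smt (verit) powr_less_mono2_neg divide_neg_pos powr_gt_zero)
  also have "(u powr (-e)) powr (-1/e) = u" using assms by (simp add: powr_powr)
  finally show ?thesis .
qed

lemma lev_equiv:
  fixes \<eta> b t :: real
  assumes "\<eta> > 1" "0 < t" "t < 1" "b > 0"
  shows "ln (1/t) powr (1-\<eta>) < b \<longleftrightarrow> t < exp (-(b powr (-1/(\<eta>-1))))"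
proof -
  have u: "ln (1/t) > 0" using assms by (simp add: ln_div)
  have "ln (1/t) powr (1-\<eta>) < b \<longleftrightarrow> ln (1/t) > b powr (-1/(\<eta>-1))"
    using powr_neg_less_iff[OF u assms(4), of "\<eta>-1"] assms by simp
  also have "\<dots> \<longleftrightarrow> t < exp (-(b powr (-1/(\<eta>-1))))"
    using assms by (smt (verit) exp_less_cancel_iff exp_ln ln_div ln_one)
  finally show ?thesis .
qed




lemma int_meas:
  fixes \<eta> s :: real
  assumes eta: "\<eta> > 1" and s: "0 < s" "s \<le> 1/2"
  shows "emeasure (v_eta \<eta>) {0<..<s} = ennreal (ln (1/s) powr (1-\<eta>) / (\<eta>-1))"
proof -
  define f where "f t = inverse t * ln (1 / t) powr (- \<eta>)" for t :: real
  define F where "F t = ln (1/t) powr (1-\<eta>) / (\<eta>-1)" for t :: real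
  have sub: "{0<..<s} \<subseteq> {0<..<(1/2::real)}" using s by auto
  have fm: "(\<lambda>t. ennreal (f t)) \<in> borel_measurable (restrict_space lborel {0<..<1/2})"
  proof -
    have "f \<in> borel_measurable borel" unfolding f_def by measurable
    then have "f \<in> borel_measurable (restrict_space lborel {0<..<1/2})"
      by (intro measurable_restrict_space1) simp
    then show ?thesis by measurable
  qed
  have A: "{0<..<s} \<in> sets (restrict_space lborel {0<..<(1/2::real)})"
    using sub by (simp add: sets_restrict_space_iff)
  have "emeasure (v_eta \<eta>) {0<..<s} = (\<integral>\<^sup>+ t. ennreal (f t) * indicator {0<..<s} t \<partial>restrict_space lborel {0<..<1/2})"
    unfolding v_eta_def f_def[symmetric] by (rule emeasure_density[OF fm A])
  also have "\<dots> = (\<integral>\<^sup>+ t. ennreal (f t) * indicator {0<..<s} t * indicator {0<..<1/2} t \<partial>lborel)"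
    by (rule nn_integral_restrict_space) simp
  also have "\<dots> = (\<integral>\<^sup>+ t. ennreal (indicator {0<..<s} t * f t) \<partial>lborel)"
    using s by (intro nn_integral_cong) (auto split: split_indicator)
  finally have e1: "emeasure (v_eta \<eta>) {0<..<s} = (\<integral>\<^sup>+ t. ennreal (indicator {0<..<s} t * f t) \<partial>lborel)" .
  have pos: "0 < x \<Longrightarrow> x < s \<Longrightarrow> ln (1/x) > 0" for x using s by (simp add: ln_div)
  have der: "DERIV F x :> f x" if "0 < x" "x < s" for x
  proof -
    have l: "ln (1/x) > 0" using pos that .
    have "((\<lambda>t. ln (1/t)) has_real_derivative (- inverse x)) (at x)"
      using that by (auto intro!: derivative_eq_intros simp: field_simps)
    then have "DERIV F x :> ((1-\<eta>) * ln (1/x) powr (1-\<eta>-1) * (- inverse x)) / (\<eta>-1)"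
      unfolding F_def using l that eta by (auto intro!: derivative_eq_intros simp: inverse_eq_divide)
    moreover have "((1-\<eta>) * ln (1/x) powr (1-\<eta>-1) * (- inverse x)) / (\<eta>-1) = f x"
      using eta that unfolding f_def by (simp add: field_simps inverse_eq_divide)
    ultimately show ?thesis by simp
  qed
  have cont: "isCont f x" if "0 < x" "x < s" for x
    using pos[OF that] that unfolding f_def by (auto intro!: continuous_intros)
  have nonneg: "0 < x \<Longrightarrow> 0 \<le> f x" for x unfolding f_def by simp
  have lim0: "(F \<longlongrightarrow> 0) (at_right 0)"
  proof -
    have "filterlim (\<lambda>t::real. ln (1/t)) at_top (at_right 0)" by real_asymp
    then have "((\<lambda>t. ln (1/t) powr (1-\<eta>)) \<longlongrightarrow> 0) (at_right 0)"
      using eta by (intro tendsto_neg_powr) auto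
    then show ?thesis unfolding F_def using tendsto_divide_zero by blast
  qed
  have lims: "(F \<longlongrightarrow> F s) (at_left s)"
  proof -
    have ls: "ln (1/s) > 0" using s by (simp add: ln_div)
    have "isCont F s" using ls s eta unfolding F_def 
      by (auto intro!: continuous_intros)
    then show ?thesis by (simp add: isCont_def filterlim_at_split)
  qed
  have ei: "einterval 0 (ereal s) = {0<..<s}" by (metis einterval_eq_Icc zero_ereal_def)
  have R: "set_integrable lborel (einterval 0 s) f" "(LBINT x=ereal 0..ereal s. f x) = F s - 0"
  proof -
    have "set_integrable lborel (einterval (ereal 0) (ereal s)) f \<and> (LBINT x=ereal 0..ereal s. f x) = F s - 0"
      using s der cont nonneg lim0 lims
      by (intro conjI interval_integral_FTC_nonneg[of "ereal 0" "ereal s" F f 0 "F s"])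
         (auto simp: einterval_iff ereal_tendsto_simps1)
    then show "set_integrable lborel (einterval 0 s) f" "(LBINT x=ereal 0..ereal s. f x) = F s - 0"
      by (auto simp: zero_ereal_def)
  qed
  have "(\<integral>\<^sup>+ t. ennreal (indicator {0<..<s} t * f t) \<partial>lborel) = ennreal (LBINT x=ereal 0..ereal s. f x)"
    using R(1) s ei unfolding set_integrable_def
    by (subst nn_integral_eq_integral) (auto simp: ei zero_ereal_def[symmetric] interval_lebesgue_integral_def set_lebesgue_integral_def nonneg split: split_indicator)
  with e1 R(2) show ?thesis by (simp add: F_def)
qed




lemma lev_iff:
  fixes \<eta> p A c t :: real
  assumes "\<eta> > 1" "p > 0" "A > 0" "c > 0" "0 < t" "t < 1"
  shows "c < A / ln (1/t) powr ((1-\<eta>)/p) \<longleftrightarrow> ln (1/t) powr (1-\<eta>) < (A/c) powr p"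
proof -
  have l: "ln (1/t) > 0" using assms by (simp add: ln_div)
  define L where "L = ln (1/t) powr ((1-\<eta>)/p)"
  have Lp: "L > 0" unfolding L_def using l by simp
  have "c < A / L \<longleftrightarrow> L < A / c" using Lp assms by (simp add: field_simps)
  also have "\<dots> \<longleftrightarrow> L powr p < (A/c) powr p"
  proof
    assume "L < A/c" then show "L powr p < (A/c) powr p" using Lp assms by (intro powr_less_mono2) auto
  next
    assume h: "L powr p < (A/c) powr p"
    show "L < A/c"
    proof (rule ccontr)
      assume "\<not> L < A/c"
      then have "(A/c) powr p \<le> L powr p" using Lp assms by (intro powr_mono2) auto
      with h show False by simp
    qed
  qed
  also have "L powr p = ln (1/t) powr (1-\<eta>)" unfolding L_def using assms by (simp add: powr_powr)
  finally show ?thesis unfolding L_def .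
qed

lemma lev_set:
  fixes \<eta> p A c \<delta> :: real
  assumes eta: "\<eta> > 1" and p: "p > 0" and A: "A > 0" and c: "c > 0" and d: "0 < \<delta>" "\<delta> \<le> 1/2"
  defines "b \<equiv> (A/c) powr p"
  defines "s \<equiv> exp (-(b powr (-1/(\<eta>-1))))"
  shows "{t \<in> {0<..<\<delta>}. c < A / ln (1/t) powr ((1-\<eta>)/p)} = {0<..<min s \<delta>}"
  using lev_iff[OF eta p A c] lev_equiv[OF eta, of _ b] d A c unfolding b_def s_def
  by (auto simp: min_def)

lemma phi_s:
  fixes \<eta> b :: real
  assumes eta: "\<eta> > 1" and b: "b > 0"
  shows "ln (1 / exp (-(b powr (-1/(\<eta>-1))))) powr (1-\<eta>) = b"
proof -
  have "ln (1 / exp (-(b powr (-1/(\<eta>-1))))) = b powr (-1/(\<eta>-1))"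
    by (simp add: ln_div)
  moreover have "-(1/(\<eta>-1)) * (1-\<eta>) = 1" using eta by (simp add: field_simps)
  ultimately show ?thesis using eta b by (simp add: powr_powr)
qed

lemma lev_meas:
  fixes \<eta> p A c \<delta> :: real
  assumes eta: "\<eta> > 1" and p: "p > 0" and A: "A > 0" and c: "c > 0" and d: "0 < \<delta>" "\<delta> \<le> 1/2"
  shows "emeasure (v_eta \<eta>) {t \<in> {0<..<\<delta>}. c < A / ln (1/t) powr ((1-\<eta>)/p)} \<le> ennreal ((A/c) powr p / (\<eta>-1))"
    and "(A/c) powr p \<le> ln (1/\<delta>) powr (1-\<eta>) \<Longrightarrow>
         emeasure (v_eta \<eta>) {t \<in> {0<..<\<delta>}. c < A / ln (1/t) powr ((1-\<eta>)/p)} = ennreal ((A/c) powr p / (\<eta>-1))"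
proof -
  define b where "b = (A/c) powr p"
  define s where "s = exp (-(b powr (-1/(\<eta>-1))))"
  have bp: "b > 0" unfolding b_def using A c by simp
  have s0: "s > 0" unfolding s_def by simp
  have s1: "s < 1" unfolding s_def using bp by simp
  have set: "{t \<in> {0<..<\<delta>}. c < A / ln (1/t) powr ((1-\<eta>)/p)} = {0<..<min s \<delta>}"
    unfolding s_def b_def by (rule lev_set[OF eta p A c d])
  have ps: "ln (1/s) powr (1-\<eta>) = b" unfolding s_def by (rule phi_s[OF eta bp])
  have case1: "emeasure (v_eta \<eta>) {0<..<min s \<delta>} = ennreal (b/(\<eta>-1))" if "s \<le> \<delta>"
    using that int_meas[OF eta s0] d ps by (simp add: min_def)
  have case2: "emeasure (v_eta \<eta>) {0<..<min s \<delta>} \<le> ennreal (b/(\<eta>-1))" if "\<delta> < s"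
  proof -
    have "ln (1/\<delta>) powr (1-\<eta>) < b" using lev_equiv[OF eta d(1) _ bp] that d unfolding s_def by simp
    then show ?thesis using that int_meas[OF eta d] eta
      by (simp add: min_def divide_right_mono ennreal_leI)
  qed
  show "emeasure (v_eta \<eta>) {t \<in> {0<..<\<delta>}. c < A / ln (1/t) powr ((1-\<eta>)/p)} \<le> ennreal ((A/c) powr p / (\<eta>-1))"
    unfolding set b_def[symmetric] using case1 case2 by fastforce
  assume "(A/c) powr p \<le> ln (1/\<delta>) powr (1-\<eta>)"
  then have "s \<le> \<delta>" using lev_equiv[OF eta d(1) _ bp] d unfolding s_def b_def by force
  then show "emeasure (v_eta \<eta>) {t \<in> {0<..<\<delta>}. c < A / ln (1/t) powr ((1-\<eta>)/p)} = ennreal ((A/c) powr p / (\<eta>-1))"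
    unfolding set b_def[symmetric] using case1 by simp
qed




lemma lev_sets:
  fixes \<eta> p A c \<delta> :: real
  assumes eta: "\<eta> > 1" and p: "p > 0" and A: "A > 0" and c: "c > 0" and d: "0 < \<delta>" "\<delta> \<le> 1/2"
  shows "{t \<in> {0<..<\<delta>}. c < A / ln (1/t) powr ((1-\<eta>)/p)} \<in> sets (v_eta \<eta>)"
proof -
  define b where "b = (A/c) powr p"
  define s where "s = exp (-(b powr (-1/(\<eta>-1))))"
  have "{t \<in> {0<..<\<delta>}. c < A / ln (1/t) powr ((1-\<eta>)/p)} = {0<..<min s \<delta>}"
    unfolding s_def b_def by (rule lev_set[OF eta p A c d])
  moreover have "{0<..<min s \<delta>} \<in> sets (v_eta \<eta>)"
    using d unfolding v_eta_def by (auto simp: sets_restrict_space_iff)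
  ultimately show ?thesis by simp
qed

context
  fixes M :: "'a measure" and p \<eta> :: real
    and T :: "real \<Rightarrow> ('a \<Rightarrow> real) \<Rightarrow> 'a \<Rightarrow> real" and f :: "'a \<Rightarrow> real"
  assumes p1: "1 \<le> p" and eta: "\<eta> > 1"
    and Tm: "(\<lambda>(x, t). T t f x) \<in> borel_measurable (M \<Otimes>\<^sub>M restrict_space lborel {0<..})"
begin

definition "V = v_eta \<eta>"
definition "N = restrict_space lborel {0<..<(1/2::real)}"
definition "Fc c = F_set M p \<eta> (\<lambda>t. T t f) c"

lemma p0: "p > 0" using p1 by simp

lemma sets_V: "sets V = sets N" unfolding V_def v_eta_def N_def by simp
lemma space_V: "space V = {0<..<1/2}" unfolding V_def v_eta_def by simp

lemma finV: "finite_measure V"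
proof (rule finite_measureI)
  have "emeasure V (space V) = ennreal (ln (1/(1/2)) powr (1-\<eta>) / (\<eta>-1))"
    unfolding space_V unfolding V_def by (rule int_meas[OF eta]) auto
  then show "emeasure V (space V) \<noteq> \<infinity>" by simp
qed

lemma sfV: "sigma_finite_measure V"
proof -
  interpret finite_measure V by (rule finV)
  show ?thesis by unfold_locales
qed

lemma Fc_sets: "Fc c \<in> sets (M \<Otimes>\<^sub>M V)"
proof -
  have eq: "sets (M \<Otimes>\<^sub>M V) = sets (M \<Otimes>\<^sub>M N)"
    by (rule sets_pair_measure_cong[OF refl sets_V])
  have id: "(\<lambda>z. z) \<in> measurable (M \<Otimes>\<^sub>M N) (M \<Otimes>\<^sub>M restrict_space lborel {0<..})"
  proof -
    have "snd \<in> measurable (M \<Otimes>\<^sub>M N) N" by simp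
    moreover have "(\<lambda>t. t) \<in> measurable N (restrict_space lborel {0<..})"
      unfolding N_def by (rule measurable_restrict_space3) auto
    ultimately have "(\<lambda>z. snd z) \<in> measurable (M \<Otimes>\<^sub>M N) (restrict_space lborel {0<..})"
      using measurable_compose by blast
    then have "(\<lambda>z. (fst z, snd z)) \<in> measurable (M \<Otimes>\<^sub>M N) (M \<Otimes>\<^sub>M restrict_space lborel {0<..})"
      by (intro measurable_Pair) auto
    then show ?thesis by simp
  qed
  have h1: "(\<lambda>(x, t). T t f x) \<in> borel_measurable (M \<Otimes>\<^sub>M N)"
    using measurable_compose[OF id Tm] by simp
  have lb: "(\<lambda>t::real. ln (1/t) powr ((1-\<eta>)/p)) \<in> borel_measurable borel" by measurable
  have h2: "(\<lambda>z. ln (1/snd z) powr ((1-\<eta>)/p)) \<in> borel_measurable (M \<Otimes>\<^sub>M N)"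
  proof -
    have "(\<lambda>t::real. ln (1/t) powr ((1-\<eta>)/p)) \<in> borel_measurable N"
      unfolding N_def using lb by (intro measurable_restrict_space1) simp
    then show ?thesis by (rule measurable_compose[OF measurable_snd])
  qed
  have h: "(\<lambda>z. \<bar>(case z of (x, t) \<Rightarrow> T t f x)\<bar> / ln (1/snd z) powr ((1-\<eta>)/p)) \<in> borel_measurable (M \<Otimes>\<^sub>M N)"
    using h1 h2 by measurable
  have "{z \<in> space (M \<Otimes>\<^sub>M N). c < \<bar>(case z of (x, t) \<Rightarrow> T t f x)\<bar> / ln (1/snd z) powr ((1-\<eta>)/p)} \<in> sets (M \<Otimes>\<^sub>M N)"
    using h by measurable
  moreover have "{z \<in> space (M \<Otimes>\<^sub>M N). c < \<bar>(case z of (x, t) \<Rightarrow> T t f x)\<bar> / ln (1/snd z) powr ((1-\<eta>)/p)} = Fc c"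
    unfolding Fc_def F_set_def N_def by (auto simp: space_pair_measure)
  ultimately show ?thesis using eq by simp
qed

lemma sec_eq: "x \<in> space M \<Longrightarrow> Pair x -` Fc c = {t \<in> {0<..<1/2}. c < \<bar>T t f x\<bar> / ln (1/t) powr ((1-\<eta>)/p)}"
  unfolding Fc_def F_set_def by auto
lemma sec_empty: "x \<notin> space M \<Longrightarrow> Pair x -` Fc c = {}"
  unfolding Fc_def F_set_def by auto

lemma emeasure_Fc: "emeasure (M \<Otimes>\<^sub>M V) (Fc c) = (\<integral>\<^sup>+x. emeasure V (Pair x -` Fc c) \<partial>M)"
  using sigma_finite_measure.emeasure_pair_measure_alt[OF sfV Fc_sets] .
lemma meas_sec: "(\<lambda>x. emeasure V (Pair x -` Fc c)) \<in> borel_measurable M"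
  using sigma_finite_measure.measurable_emeasure_Pair[OF sfV Fc_sets] .

lemma cmult_Fc: "ennreal (c powr p) * emeasure (M \<Otimes>\<^sub>M V) (Fc c) = (\<integral>\<^sup>+x. ennreal (c powr p) * emeasure V (Pair x -` Fc c) \<partial>M)"
  unfolding emeasure_Fc by (rule nn_integral_cmult[symmetric, OF meas_sec])


lemma pw1:
  assumes c: "c > 0"
  shows "ennreal (c powr p) * emeasure V (Pair x -` Fc c) \<le> ennreal (1/(\<eta>-1)) * enn_powr (Tstar T f x) p"
proof (cases "x \<in> space M \<and> Tstar T f x \<noteq> \<infinity>")
  case False
  show ?thesis
  proof (cases "x \<in> space M")
    case False then show ?thesis using sec_empty by simp
  next
    case True
    with \<open>\<not> (x \<in> space M \<and> Tstar T f x \<noteq> \<infinity>)\<close> have "Tstar T f x = \<infinity>" by simp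
    then have "enn_powr (Tstar T f x) p = \<infinity>" unfolding enn_powr_def by simp
    moreover have "ennreal (1/(\<eta>-1)) \<noteq> 0" using eta by simp
    ultimately show ?thesis by (simp add: ennreal_mult_top)
  qed
next
  case True
  then have x: "x \<in> space M" and fin: "Tstar T f x \<noteq> \<infinity>" by auto
  define A where "A = enn2real (Tstar T f x)"
  have TA: "Tstar T f x = ennreal A" unfolding A_def using fin by (simp add: ennreal_enn2real_if)
  have A0: "A \<ge> 0" unfolding A_def by simp
  have bnd: "\<bar>T t f x\<bar> \<le> A" if "t > 0" for t
  proof -
    have "ennreal \<bar>T t f x\<bar> \<le> Tstar T f x" unfolding Tstar_def using that by (auto intro: SUP_upper)
    then show ?thesis using TA A0 by simp
  qed
  have Lpos: "ln (1/t) powr ((1-\<eta>)/p) > 0" if "0 < t" "t < 1/2" for t :: real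
    using that by (simp add: ln_div)
  show ?thesis
  proof (cases "A = 0")
    case True
    have "Pair x -` Fc c = {}"
    proof -
      { fix t assume t: "0 < t" "t < 1/2" "c < \<bar>T t f x\<bar> / ln (1/t) powr ((1-\<eta>)/p)"
        have "\<bar>T t f x\<bar> = 0" using bnd[of t] t True by simp
        then have False using t c by simp }
      then show ?thesis using sec_eq[OF x] by auto
    qed
    then show ?thesis by simp
  next
    case False
    then have Ap: "A > 0" using A0 by simp
    have sub: "Pair x -` Fc c \<subseteq> {t \<in> {0<..<1/2}. c < A / ln (1/t) powr ((1-\<eta>)/p)}"
    proof
      fix t assume "t \<in> Pair x -` Fc c"
      then have t: "0 < t" "t < 1/2" "c < \<bar>T t f x\<bar> / ln (1/t) powr ((1-\<eta>)/p)" using sec_eq[OF x] by auto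
      have "\<bar>T t f x\<bar> / ln (1/t) powr ((1-\<eta>)/p) \<le> A / ln (1/t) powr ((1-\<eta>)/p)"
        using bnd[of t] Lpos[OF t(1,2)] t by (intro divide_right_mono) auto
      then show "t \<in> {t \<in> {0<..<1/2}. c < A / ln (1/t) powr ((1-\<eta>)/p)}" using t by auto
    qed
    have "emeasure V (Pair x -` Fc c) \<le> emeasure V {t \<in> {0<..<1/2}. c < A / ln (1/t) powr ((1-\<eta>)/p)}"
      using sub lev_sets[OF eta p0 Ap c, of "1/2"] unfolding V_def by (intro emeasure_mono) auto
    also have "\<dots> \<le> ennreal ((A/c) powr p / (\<eta>-1))"
      unfolding V_def by (rule lev_meas(1)[OF eta p0 Ap c]) auto
    finally have le: "emeasure V (Pair x -` Fc c) \<le> ennreal ((A/c) powr p / (\<eta>-1))" .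
    have "ennreal (c powr p) * emeasure V (Pair x -` Fc c) \<le> ennreal (c powr p) * ennreal ((A/c) powr p / (\<eta>-1))"
      by (rule mult_left_mono[OF le]) simp
    also have "\<dots> = ennreal (c powr p * ((A/c) powr p / (\<eta>-1)))"
      using eta by (subst ennreal_mult) auto
    also have "c powr p * ((A/c) powr p / (\<eta>-1)) = (1/(\<eta>-1)) * A powr p"
    proof -
      have "c powr p > 0" using c by simp
      then show ?thesis using c Ap eta by (simp add: powr_divide field_simps)
    qed
    also have "ennreal \<dots> = ennreal (1/(\<eta>-1)) * enn_powr (Tstar T f x) p"
    proof -
      have "enn_powr (Tstar T f x) p = ennreal (A powr p)" unfolding TA enn_powr_def using A0 by simp
      moreover have "ennreal (1/(\<eta>-1)) * ennreal (A powr p) = ennreal (1/(\<eta>-1) * A powr p)"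
        using eta by (subst ennreal_mult) auto
      ultimately show ?thesis by simp
    qed
    finally show ?thesis .
  qed
qed

lemma part1:
  assumes Tsm: "Tstar T f \<in> borel_measurable M"
  shows "(SUP c\<in>{0<..}. ennreal (c powr p) * emeasure (M \<Otimes>\<^sub>M V) (Fc c))
         \<le> ennreal (1 / (\<eta> - 1)) * (\<integral>\<^sup>+ x. enn_powr (Tstar T f x) p \<partial>M)"
proof (rule SUP_least)
  fix c :: real assume "c \<in> {0<..}"
  then have c: "c > 0" by simp
  have em: "(\<lambda>x. enn_powr (Tstar T f x) p) \<in> borel_measurable M"
    unfolding enn_powr_def using Tsm by measurable
  have "ennreal (c powr p) * emeasure (M \<Otimes>\<^sub>M V) (Fc c) = (\<integral>\<^sup>+x. ennreal (c powr p) * emeasure V (Pair x -` Fc c) \<partial>M)"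
    by (rule cmult_Fc)
  also have "\<dots> \<le> (\<integral>\<^sup>+x. ennreal (1/(\<eta>-1)) * enn_powr (Tstar T f x) p \<partial>M)"
    by (intro nn_integral_mono pw1 c)
  also have "\<dots> = ennreal (1 / (\<eta> - 1)) * (\<integral>\<^sup>+ x. enn_powr (Tstar T f x) p \<partial>M)"
    by (rule nn_integral_cmult[OF em])
  finally show "ennreal (c powr p) * emeasure (M \<Otimes>\<^sub>M V) (Fc c) \<le> ennreal (1 / (\<eta> - 1)) * (\<integral>\<^sup>+ x. enn_powr (Tstar T f x) p \<partial>M)" .
qed


lemma pw2:
  assumes x: "x \<in> space M" and conv: "((\<lambda>t. T t f x) \<longlongrightarrow> g) (at_right 0)"
    and z: "z < ennreal (1/(\<eta>-1)) * ennreal (\<bar>g\<bar> powr p)"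
  shows "eventually (\<lambda>c. z < ennreal (c powr p) * emeasure V (Pair x -` Fc c)) at_top"
proof -
  define a where "a = \<bar>g\<bar>"
  have zz: "z < ennreal (a powr p / (\<eta>-1))"
    using z eta unfolding a_def by (subst (asm) ennreal_mult[symmetric]) (auto simp: field_simps)
  then have a0: "a > 0" unfolding a_def by (cases "g = 0") auto
  define zr where "zr = enn2real z"
  have zeq: "z = ennreal zr" unfolding zr_def using zz by (cases z) auto
  have zr0: "zr \<ge> 0" unfolding zr_def by simp
  have zlt: "zr < a powr p / (\<eta>-1)" using zz zeq zr0 by (simp add: ennreal_less_iff)
  define w where "w = zr * (\<eta>-1)"
  have w0: "w \<ge> 0" unfolding w_def using zr0 eta by simp
  have wlt: "w < a powr p" unfolding w_def using zlt eta by (simp add: field_simps)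
  have wr: "w powr (1/p) < a"
  proof -
    have "w powr (1/p) < (a powr p) powr (1/p)" using wlt w0 p0 by (intro powr_less_mono2) auto
    also have "\<dots> = a" using a0 p0 by (simp add: powr_powr)
    finally show ?thesis .
  qed
  define A where "A = (w powr (1/p) + a) / 2"
  have A0: "A > 0" unfolding A_def using a0 by (simp add: add_nonneg_pos)
  have Aa: "A < a" unfolding A_def using wr by simp
  have Aw: "w < A powr p"
  proof -
    have "w = (w powr (1/p)) powr p" using p0 w0 by (simp add: powr_powr)
    also have "\<dots> < A powr p" using wr p0 unfolding A_def by (intro powr_less_mono2) auto
    finally show ?thesis .
  qed
  have zA: "z < ennreal (A powr p / (\<eta>-1))"
    using Aw eta zr0 unfolding zeq w_def by (subst ennreal_less_iff) (auto simp: field_simps)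
  have "((\<lambda>t. \<bar>T t f x\<bar>) \<longlongrightarrow> a) (at_right 0)" unfolding a_def by (rule tendsto_rabs[OF conv])
  then have "eventually (\<lambda>t. A < \<bar>T t f x\<bar>) (at_right 0)" using Aa by (rule order_tendstoD)
  then obtain d0 where d0: "d0 > 0" and hd: "\<And>t. 0 < t \<Longrightarrow> t < d0 \<Longrightarrow> A < \<bar>T t f x\<bar>"
    unfolding eventually_at_right_field by auto
  define d where "d = min d0 (1/2)"
  have d: "0 < d" "d \<le> 1/2" unfolding d_def using d0 by auto
  have phd: "ln (1/d) powr (1-\<eta>) > 0" using d by (simp add: ln_div)
  have "((\<lambda>c. (A/c) powr p) \<longlongrightarrow> 0) at_top"
  proof (rule tendsto_zero_powrI)
    show "((\<lambda>c::real. A/c) \<longlongrightarrow> 0) at_top" by real_asymp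
    show "((\<lambda>c::real. p) \<longlongrightarrow> p) at_top" by simp
    show "\<forall>\<^sub>F c in at_top. 0 \<le> A / (c::real)"
      using eventually_ge_at_top[of "0::real"] by eventually_elim (use A0 in simp)
  qed (use p0 in simp)
  then have ev1: "eventually (\<lambda>c. (A/c) powr p < ln (1/d) powr (1-\<eta>)) at_top"
    using phd by (rule order_tendstoD)
  show ?thesis
    using ev1 eventually_gt_at_top[of "0::real"]
  proof eventually_elim
    case (elim c)
    then have c: "c > 0" and cb: "(A/c) powr p \<le> ln (1/d) powr (1-\<eta>)" by auto
    have sub: "{t \<in> {0<..<d}. c < A / ln (1/t) powr ((1-\<eta>)/p)} \<subseteq> Pair x -` Fc c"
    proof
      fix t assume "t \<in> {t \<in> {0<..<d}. c < A / ln (1/t) powr ((1-\<eta>)/p)}"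
      then have t: "0 < t" "t < d" "c < A / ln (1/t) powr ((1-\<eta>)/p)" by auto
      have t2: "t < 1/2" "t < d0" using t d_def by auto
      have Lp: "ln (1/t) powr ((1-\<eta>)/p) > 0" using t t2 by (simp add: ln_div)
      have "A / ln (1/t) powr ((1-\<eta>)/p) \<le> \<bar>T t f x\<bar> / ln (1/t) powr ((1-\<eta>)/p)"
        using hd[OF t(1) t2(2)] Lp by (intro divide_right_mono) auto
      then show "t \<in> Pair x -` Fc c" using t t2 sec_eq[OF x] by auto
    qed
    have secm: "Pair x -` Fc c \<in> sets V" using Fc_sets[of c] by (rule sets_Pair1)
    have "ennreal (A powr p / (\<eta>-1)) = ennreal (c powr p) * ennreal ((A/c) powr p / (\<eta>-1))"
    proof -
      have "c powr p > 0" using c by simp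
      then have "A powr p / (\<eta>-1) = c powr p * ((A/c) powr p / (\<eta>-1))"
        using c A0 eta by (simp add: powr_divide field_simps)
      then show ?thesis using eta by (subst ennreal_mult[symmetric]) auto
    qed
    also have "\<dots> = ennreal (c powr p) * emeasure V {t \<in> {0<..<d}. c < A / ln (1/t) powr ((1-\<eta>)/p)}"
      unfolding V_def using lev_meas(2)[OF eta p0 A0 c d cb] by simp
    also have "\<dots> \<le> ennreal (c powr p) * emeasure V (Pair x -` Fc c)"
      by (intro mult_left_mono emeasure_mono sub secm) simp
    finally show ?case using zA by simp
  qed
qed


lemma part2:
  assumes ae: "AE x in M. ((\<lambda>t. T t f x) \<longlongrightarrow> g x) (at_right 0)"
  shows "ennreal (1/(\<eta>-1)) * Lp_pow M p g \<le> Liminf at_top (\<lambda>c::real. ennreal (c powr p) * emeasure (M \<Otimes>\<^sub>M V) (Fc c))"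
    (is "?I \<le> Liminf at_top ?X")
proof -
  define g' where "g' x = lim (\<lambda>n. T (1 / real (Suc n)) f x)" for x
  have Tn: "(\<lambda>x. T (1 / real (Suc n)) f x) \<in> borel_measurable M" for n
  proof -
    have "(\<lambda>x. (x, 1 / real (Suc n))) \<in> measurable M (M \<Otimes>\<^sub>M restrict_space lborel {0<..})"
      by (intro measurable_Pair measurable_ident_sets measurable_const) (auto simp: space_restrict_space)
    from measurable_compose[OF this Tm] show ?thesis by simp
  qed
  have g'm: "g' \<in> borel_measurable M" unfolding g'_def using Tn by measurable
  have seq: "filterlim (\<lambda>n. 1 / real (Suc n)) (at_right 0) sequentially"
  proof (rule tendsto_imp_filterlim_at_right)
    show "(\<lambda>n. 1 / real (Suc n)) \<longlonglongrightarrow> 0" by real_asymp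
  qed simp
  have aeg: "AE x in M. g' x = g x"
    using ae
  proof eventually_elim
    case (elim x)
    have "(\<lambda>n. T (1 / real (Suc n)) f x) \<longlonglongrightarrow> g x"
      using filterlim_compose[OF elim seq] by (simp add: o_def)
    then show ?case unfolding g'_def by (rule limI)
  qed
  have Ig: "?I = (\<integral>\<^sup>+x. ennreal (1/(\<eta>-1)) * ennreal (\<bar>g' x\<bar> powr p) \<partial>M)"
  proof -
    have "Lp_pow M p g = (\<integral>\<^sup>+x. ennreal (\<bar>g' x\<bar> powr p) \<partial>M)"
      unfolding Lp_pow_def using aeg by (intro nn_integral_cong_AE) auto
    moreover have "(\<lambda>x. ennreal (\<bar>g' x\<bar> powr p)) \<in> borel_measurable M" using g'm by measurable
    ultimately show ?thesis by (simp add: nn_integral_cmult)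
  qed
  show ?thesis
    unfolding le_Liminf_iff
  proof (intro allI impI)
    fix y assume yI: "y < ?I"
    show "eventually (\<lambda>c. y < ?X c) at_top"
    proof (rule ccontr)
      assume "\<not> eventually (\<lambda>c. y < ?X c) at_top"
      then have "\<forall>N. \<exists>c\<ge>N. \<not> y < ?X c" unfolding eventually_at_top_linorder by auto
      then have "\<forall>n::nat. \<exists>c. c \<ge> real n + 1 \<and> ?X c \<le> y" by (auto simp: not_less)
      then obtain cs where cs: "\<And>n. cs n \<ge> real n + 1" "\<And>n. ?X (cs n) \<le> y" by metis
      have csp: "cs n > 0" for n using cs(1)[of n] by simp
      have csl: "filterlim cs at_top sequentially"
        by (rule filterlim_at_top_mono[OF filterlim_real_sequentially]) (use cs(1) in \<open>auto intro!: always_eventually intro: order_trans[OF _ cs(1)]\<close>)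
      define u where "u n x = ennreal (cs n powr p) * emeasure V (Pair x -` Fc (cs n))" for n x
      have um: "u n \<in> borel_measurable M" for n unfolding u_def using meas_sec by measurable
      have ui: "integral\<^sup>N M (u n) = ?X (cs n)" for n unfolding u_def by (rule cmult_Fc[symmetric])
      have pwae: "AE x in M. ennreal (1/(\<eta>-1)) * ennreal (\<bar>g' x\<bar> powr p) \<le> liminf (\<lambda>n. u n x)"
        using ae aeg AE_space
      proof eventually_elim
        case (elim x)
        show ?case unfolding le_Liminf_iff
        proof (intro allI impI)
          fix z assume "z < ennreal (1/(\<eta>-1)) * ennreal (\<bar>g' x\<bar> powr p)"
          then have "z < ennreal (1/(\<eta>-1)) * ennreal (\<bar>g x\<bar> powr p)" using elim by simp
          from pw2[OF _ _ this] elim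
          have "eventually (\<lambda>c. z < ennreal (c powr p) * emeasure V (Pair x -` Fc c)) at_top" by simp
          from eventually_compose_filterlim[OF this csl]
          show "eventually (\<lambda>n. z < u n x) sequentially" unfolding u_def .
        qed
      qed
      have "?I = (\<integral>\<^sup>+x. ennreal (1/(\<eta>-1)) * ennreal (\<bar>g' x\<bar> powr p) \<partial>M)" by (rule Ig)
      also have "\<dots> \<le> (\<integral>\<^sup>+x. liminf (\<lambda>n. u n x) \<partial>M)" by (rule nn_integral_mono_AE[OF pwae])
      also have "\<dots> \<le> liminf (\<lambda>n. integral\<^sup>N M (u n))" by (rule nn_integral_liminf[OF um])
      also have "\<dots> \<le> y" unfolding ui by (rule Liminf_le) (auto intro: always_eventually cs(2))
      finally show False using yI by simp
    qed
  qed
qed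

end

theorem mainTheorem3:
  fixes M :: "'a measure" and p \<eta> :: real
    and T :: "real \<Rightarrow> ('a \<Rightarrow> real) \<Rightarrow> 'a \<Rightarrow> real" and f :: "'a \<Rightarrow> real"
  assumes "sigma_finite_measure M"
    and "1 \<le> p" and "\<eta> > 1"
    and "\<And>t h. t > 0 \<Longrightarrow> memLp M p h \<Longrightarrow> memLp M p (T t h)"
    and "memLp M p f"
    and "(\<lambda>(x, t). T t f x) \<in> borel_measurable (M \<Otimes>\<^sub>M restrict_space lborel {0<..})"
  shows
    "((Tstar T f \<in> borel_measurable M \<and> (\<integral>\<^sup>+ x. enn_powr (Tstar T f x) p \<partial>M) < \<infinity>) \<longrightarrow>
       (SUP c\<in>{0<..}. ennreal (c powr p) * emeasure (M \<Otimes>\<^sub>M v_eta \<eta>) (F_set M p \<eta> (\<lambda>t. T t f) c))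
         \<le> ennreal (1 / (\<eta> - 1)) * (\<integral>\<^sup>+ x. enn_powr (Tstar T f x) p \<partial>M))
   \<and> (\<forall>C::real. (p > 1 \<and> C \<ge> 0 \<and>
        (\<forall>h. memLp M p h \<longrightarrow> Tstar T h \<in> borel_measurable M \<and>
             (\<integral>\<^sup>+ x. enn_powr (Tstar T h x) p \<partial>M) \<le> ennreal (C powr p) * Lp_pow M p h)) \<longrightarrow>
       (SUP c\<in>{0<..}. ennreal (c powr p) * emeasure (M \<Otimes>\<^sub>M v_eta \<eta>) (F_set M p \<eta> (\<lambda>t. T t f) c))
         \<le> ennreal (C powr p / (\<eta> - 1)) * Lp_pow M p f)
   \<and> (\<forall>g::'a \<Rightarrow> real. (AE x in M. ((\<lambda>t. T t f x) \<longlongrightarrow> g x) (at_right 0)) \<longrightarrow>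
       ennreal (1 / (\<eta> - 1)) * Lp_pow M p g
         \<le> Liminf at_top (\<lambda>c::real. ennreal (c powr p) * emeasure (M \<Otimes>\<^sub>M v_eta \<eta>) (F_set M p \<eta> (\<lambda>t. T t f) c)))"
proof -
  have Vd: "V \<eta> = v_eta \<eta>" using V_def[of p \<eta> T f M, OF assms(2,3,6)] .
  have Fd: "\<And>c. Fc M p \<eta> T f c = F_set M p \<eta> (\<lambda>t. T t f) c" using Fc_def[of p \<eta> T f M, OF assms(2,3,6)] .
  note P1 = part1[of p \<eta> T f M, OF assms(2,3,6), unfolded Vd Fd]
  note P2 = part2[of p \<eta> T f M, OF assms(2,3,6), unfolded Vd Fd]
  show ?thesis
  proof (intro conjI allI impI)
    assume "Tstar T f \<in> borel_measurable M \<and> (\<integral>\<^sup>+ x. enn_powr (Tstar T f x) p \<partial>M) < \<infinity>"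
    then show "(SUP c\<in>{0<..}. ennreal (c powr p) * emeasure (M \<Otimes>\<^sub>M v_eta \<eta>) (F_set M p \<eta> (\<lambda>t. T t f) c))
         \<le> ennreal (1 / (\<eta> - 1)) * (\<integral>\<^sup>+ x. enn_powr (Tstar T f x) p \<partial>M)" using P1 by blast
  next
    fix C :: real
    assume H: "p > 1 \<and> C \<ge> 0 \<and>
        (\<forall>h. memLp M p h \<longrightarrow> Tstar T h \<in> borel_measurable M \<and>
             (\<integral>\<^sup>+ x. enn_powr (Tstar T h x) p \<partial>M) \<le> ennreal (C powr p) * Lp_pow M p h)"
    then have Tsm: "Tstar T f \<in> borel_measurable M"
      and bd: "(\<integral>\<^sup>+ x. enn_powr (Tstar T f x) p \<partial>M) \<le> ennreal (C powr p) * Lp_pow M p f"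
      using assms(5) by auto
    have "(SUP c\<in>{0<..}. ennreal (c powr p) * emeasure (M \<Otimes>\<^sub>M v_eta \<eta>) (F_set M p \<eta> (\<lambda>t. T t f) c))
         \<le> ennreal (1 / (\<eta> - 1)) * (\<integral>\<^sup>+ x. enn_powr (Tstar T f x) p \<partial>M)" using P1[OF Tsm] .
    also have "\<dots> \<le> ennreal (1 / (\<eta> - 1)) * (ennreal (C powr p) * Lp_pow M p f)"
      by (rule mult_left_mono[OF bd]) simp
    also have "\<dots> = ennreal (C powr p / (\<eta> - 1)) * Lp_pow M p f"
    proof -
      have "ennreal (1 / (\<eta> - 1)) * ennreal (C powr p) = ennreal (C powr p / (\<eta> - 1))"
        using assms(3) by (subst ennreal_mult[symmetric]) auto
      then show ?thesis by (simp add: mult.assoc[symmetric])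
    qed
    finally show "(SUP c\<in>{0<..}. ennreal (c powr p) * emeasure (M \<Otimes>\<^sub>M v_eta \<eta>) (F_set M p \<eta> (\<lambda>t. T t f) c))
         \<le> ennreal (C powr p / (\<eta> - 1)) * Lp_pow M p f" .
  next
    fix g :: "'a \<Rightarrow> real"
    assume "AE x in M. ((\<lambda>t. T t f x) \<longlongrightarrow> g x) (at_right 0)"
    then show "ennreal (1 / (\<eta> - 1)) * Lp_pow M p g
         \<le> Liminf at_top (\<lambda>c::real. ennreal (c powr p) * emeasure (M \<Otimes>\<^sub>M v_eta \<eta>) (F_set M p \<eta> (\<lambda>t. T t f) c))"
      by (rule P2)
  qed
qed

end
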